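(* Let $\mathcal{L}_{\rm GM}$ be the golden mean language and let ${\rm S}:\mathcal{L}_{\rm GM}\to\mathbb{N}$ be a homomorphism. Write ${\rm S}_a={\rm S}(a)$, ${\rm S}_b={\rm S}(b)$, and suppose $\gcd({\rm S}_a,{\rm S}_b)=1$, ${\rm S}_a>1$ and ${\rm S}_b>1$. Then $\mathbb{N}\setminus {\rm S}(\mathcal{L}_{\rm GM})$ is finite and nonempty, and $$\max\,\big(\mathbb{N}\setminus {\rm S}(\mathcal{L}_{\rm GM})\big)={\rm S}_a({\rm S}_a-3)+{\rm S}_b({\rm S}_a-1).$$
   Context: $\mathbb{N}=\{1,2,3,\dots\}$. The golden mean language $\mathcal{L}_{\rm GM}$ is the set of all nonempty finite words over the alphabet $\{a,b\}$ in which $bb$ does not occur as a subword (factor). A homomorphism ${\rm S}:\mathcal{L}\to\mathbb{N}$ of a language $\mathcal{L}$ over an alphabet is a map with ${\rm S}(w_1w_2\cdots w_n)={\rm S}(w_1)+\cdots+{\rm S}(w_n)$ for every word $w_1\cdots w_n\in\mathcal{L}$ (equivalently ${\rm S}(vw)={\rm S}(v)+{\rm S}(w)$), so it is determined by the positive integers ${\rm S}(a),{\rm S}(b)$. *)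

theory Defs
  imports Main
begin

datatype letter = a | b

definition golden_mean_language :: "letter list set" where
  "golden_mean_language = {w. w \<noteq> [] \<and> (\<nexists>u v. w = u @ [b, b] @ v)}"

definition is_hom :: "letter list set \<Rightarrow> (letter list \<Rightarrow> nat) \<Rightarrow> bool" where
  "is_hom L S \<longleftrightarrow> (\<forall>w\<in>L. S w > 0) \<and>
     (\<forall>w\<in>L. S w = sum_list (map (\<lambda>x. S [x]) w))"

end

theory Submission imports Defs begin

fun nobb :: "letter list \<Rightarrow> bool" where
  "nobb [] = True"
| "nobb [x] = True"
| "nobb (x # y # zs) = (\<not> (x = b \<and> y = b) \<and> nobb (y # zs))"

lemma nobb_iff: "(\<exists>u v. w = u @ [b, b] @ v) \<longleftrightarrow> \<not> nobb w"
proof (induction w rule: nobb.induct)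
  case 1 then show ?case by simp
next
  case (2 x) then show ?case by (simp add: Cons_eq_append_conv)
next
  case (3 x y zs)
  have "(\<exists>u v. x # y # zs = u @ [b, b] @ v) \<longleftrightarrow> (x = b \<and> y = b) \<or> (\<exists>u v. y # zs = u @ [b, b] @ v)"
  proof
    assume "\<exists>u v. x # y # zs = u @ [b, b] @ v"
    then obtain u v where h: "x # y # zs = u @ [b, b] @ v" by blast
    show "(x = b \<and> y = b) \<or> (\<exists>u v. y # zs = u @ [b, b] @ v)"
    proof (cases u)
      case Nil then show ?thesis using h by simp
    next
      case (Cons c u') then show ?thesis using h by auto
    qed
  next
    assume "(x = b \<and> y = b) \<or> (\<exists>u v. y # zs = u @ [b, b] @ v)"
    then show "\<exists>u v. x # y # zs = u @ [b, b] @ v"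
    proof
      assume "x = b \<and> y = b" then show ?thesis by (rule_tac x="[]" in exI) simp
    next
      assume "\<exists>u v. y # zs = u @ [b, b] @ v"
      then obtain u v where "y # zs = u @ [b, b] @ v" by blast
      then show ?thesis by (rule_tac x="x # u" in exI) simp
    qed
  qed
  then show ?case using 3 by simp
qed

definition ca :: "letter list \<Rightarrow> nat" where "ca w = length (filter (\<lambda>x. x = a) w)"
definition cb :: "letter list \<Rightarrow> nat" where "cb w = length (filter (\<lambda>x. x = b) w)"

lemma nobb_count: "nobb w \<Longrightarrow> cb w \<le> ca w + 1"
proof (induction w rule: induct_list012)
  case 1 then show ?case by (simp add: ca_def cb_def)
next
  case (2 x) then show ?case by (cases x) (simp_all add: ca_def cb_def)
next
  case (3 x y zs)
  show ?case
  proof (cases x)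
    case a then show ?thesis using 3 by (simp add: ca_def cb_def)
  next
    case b
    then have "y = a" using 3(3) by (cases y) auto
    moreover have "nobb zs" using 3(3) by (cases zs) auto
    ultimately show ?thesis using 3 b by (simp add: ca_def cb_def)
  qed
qed

lemma sum_count: "sum_list (map f w) = ca w * f a + cb w * f b"
proof (induction w)
  case Nil then show ?case by (simp add: ca_def cb_def)
next
  case (Cons x w) then show ?case by (cases x) (simp_all add: ca_def cb_def)
qed

fun g :: "nat \<Rightarrow> nat \<Rightarrow> letter list" where
  "g i 0 = replicate i a"
| "g i (Suc j) = b # (case i of 0 \<Rightarrow> [] | Suc i' \<Rightarrow> a # g i' j)"

lemma nobb_a: "nobb (a # w) = nobb w"
  by (cases w) auto

lemma nobb_rep: "nobb (replicate i a)"
  by (induction i) (simp_all add: nobb_a)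

lemma g_props: "j \<le> i + 1 \<Longrightarrow> nobb (g i j) \<and> ca (g i j) = i \<and> cb (g i j) = j"
proof (induction i j rule: g.induct)
  case (1 i) then show ?case by (simp add: nobb_rep ca_def cb_def)
next
  case (2 i j)
  show ?case
  proof (cases i)
    case 0 then show ?thesis using 2 by (simp add: ca_def cb_def)
  next
    case (Suc i') then show ?thesis using 2 by (simp add: ca_def cb_def nobb_a)
  qed
qed

lemma rep_big:
  fixes p q n :: int
  assumes p: "p > 1" and q: "q > 1" and cop: "coprime p q"
    and n: "n > p*(p-3) + q*(p-1)"
  shows "\<exists>i j. i \<ge> 0 \<and> j \<ge> 0 \<and> j \<le> i + 1 \<and> n = i*p + j*q"
proof -
  obtain u v where uv: "u * q + v * p = 1" using bezout_int[of q p] cop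
    by (metis coprime_iff_gcd_eq_1 gcd.commute)
  define j0 where "j0 = (n*u) mod p"
  define d where "d = (n*u) div p"
  have nu: "n*u = p*d + j0" unfolding j0_def d_def by simp
  have j0r: "0 \<le> j0" "j0 < p" using p unfolding j0_def by simp_all
  define k where "k = n*v + d*q"
  have nk: "n - j0*q = p*k"
  proof -
    have "j0*q = n*u*q - p*d*q" using nu by (simp add: algebra_simps)
    also have "n*u*q = n*(1 - v*p)"
    proof -
      have "u*q = 1 - v*p" using uv by simp
      then show ?thesis by (metis mult.assoc)
    qed
    finally show ?thesis unfolding k_def by (simp add: algebra_simps)
  qed
  have "p*(p-3) + q*(p-1) \<ge> j0*(p+q) - 2*p"
  proof -
    have "j0 \<le> p - 1" using j0r by simp
    then have "j0*(p+q) \<le> (p-1)*(p+q)" using p q by (intro mult_right_mono) auto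
    then show ?thesis by (simp add: algebra_simps)
  qed
  then have "p*k > p*(j0 - 2)" using n nk by (simp add: algebra_simps)
  then have k1: "k > j0 - 2" using p by simp
  have k0: "k \<ge> 0"
  proof (cases "j0 = 0")
    case True
    have "p*(p-3) + q*(p-1) \<ge> 0"
    proof (cases "p = 2")
      case True then show ?thesis using q by simp
    next
      case False
      then have "p \<ge> 3" using p by simp
      then show ?thesis using q by (simp add: mult_nonneg_nonneg)
    qed
    then have "p*k > 0" using True nk n by simp
    then show ?thesis using p by (simp add: zero_less_mult_iff)
  next
    case False then show ?thesis using k1 j0r by simp
  qed
  show ?thesis
    by (rule exI[of _ k], rule exI[of _ j0]) (use k0 k1 j0r nk in \<open>auto simp: algebra_simps\<close>)
qed

lemma not_rep:
  fixes p q i j :: int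
  assumes p: "p > 1" and q: "q > 1" and cop: "coprime p q"
    and ij: "i \<ge> 0" "j \<ge> 0" "j \<le> i + 1"
  shows "p*(p-3) + q*(p-1) \<noteq> i*p + j*q"
proof
  assume e: "p*(p-3) + q*(p-1) = i*p + j*q"
  have "(j - p + 1)*q = p*(p - 3 - i)" using e by (simp add: algebra_simps)
  then have "p dvd (j - p + 1)*q" by simp
  then have "p dvd (j - p + 1)" using cop by (simp add: coprime_dvd_mult_left_iff)
  then obtain t where t: "j - p + 1 = p*t" by blast
  have "t \<ge> 0"
  proof (rule ccontr)
    assume "\<not> t \<ge> 0"
    then have "t \<le> -1" by simp
    then have "p*t \<le> p*(-1)" using p by (intro mult_left_mono) auto
    then show False using t ij by simp
  qed
  then have "p*t \<ge> 0" using p by simp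
  then have j: "j \<ge> p - 1" using t by simp
  then have i: "i \<ge> p - 2" using ij by simp
  have "i*p \<ge> (p-2)*p" using i p by (intro mult_right_mono) auto
  moreover have "j*q \<ge> (p-1)*q" using j q by (intro mult_right_mono) auto
  ultimately have "i*p + j*q \<ge> p*(p-3) + q*(p-1) + p" by (simp add: algebra_simps)
  then show False using e p by simp
qed


lemma M_pos:
  fixes p q :: int assumes p: "p > 1" and q: "q > 1" and cop: "coprime p q"
  shows "p*(p-3) + q*(p-1) > 0"
proof (cases "p = 2")
  case True
  have "q \<noteq> 2" using cop True by auto
  then show ?thesis using q True by simp
next
  case False
  then have "p \<ge> 3" using p by simp
  then have "p*(p-3) \<ge> 0" by simp
  moreover have "q*(p-1) > 0" using p q by simp
  ultimately show ?thesis by simp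
qed

theorem theorem1:
  fixes S :: "letter list \<Rightarrow> nat"
  assumes "is_hom golden_mean_language S"
    and "coprime (S [a]) (S [b])"
    and "S [a] > 1" and "S [b] > 1"
  shows "finite ({1..} - S ` golden_mean_language) \<and>
         {1..} - S ` golden_mean_language \<noteq> {} \<and>
         int (Max ({1..} - S ` golden_mean_language)) =
           int (S [a]) * (int (S [a]) - 3) + int (S [b]) * (int (S [a]) - 1)"
proof -
  define P where "P = S [a]"
  define Q where "Q = S [b]"
  define L where "L = golden_mean_language"
  have hom: "\<And>w. w \<in> L \<Longrightarrow> S w > 0 \<and> S w = ca w * P + cb w * Q"
    using assms(1) unfolding is_hom_def L_def P_def Q_def by (metis sum_count)
  have Lchar: "\<And>w. w \<in> L \<longleftrightarrow> w \<noteq> [] \<and> nobb w"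
    unfolding L_def golden_mean_language_def using nobb_iff by auto
  have img: "\<And>n. n \<in> S ` L \<longleftrightarrow> n > 0 \<and> (\<exists>i j. n = i*P + j*Q \<and> j \<le> i + 1)"
  proof
    fix n assume "n \<in> S ` L"
    then obtain w where w: "w \<in> L" "n = S w" by blast
    then show "n > 0 \<and> (\<exists>i j. n = i*P + j*Q \<and> j \<le> i + 1)"
      using hom[OF w(1)] nobb_count Lchar by blast
  next
    fix n assume h: "n > 0 \<and> (\<exists>i j. n = i*P + j*Q \<and> j \<le> i + 1)"
    then obtain i j where ij: "n = i*P + j*Q" "j \<le> i + 1" by blast
    have gp: "nobb (g i j)" "ca (g i j) = i" "cb (g i j) = j" using g_props[OF ij(2)] by auto
    have "g i j \<noteq> []"
    proof
      assume "g i j = []"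
      then have "i = 0" "j = 0" using gp by (auto simp: ca_def cb_def)
      then show False using h ij by simp
    qed
    then have gL: "g i j \<in> L" using Lchar gp by simp
    then have "S (g i j) = n" using hom[OF gL] gp ij by simp
    then show "n \<in> S ` L" using gL by blast
  qed
  define p where "p = int P"
  define q where "q = int Q"
  define M where "M = p*(p-3) + q*(p-1)"
  have p1: "p > 1" and q1: "q > 1" using assms unfolding p_def q_def P_def Q_def by simp_all
  have cop: "coprime p q" using assms(2) unfolding p_def q_def P_def Q_def by simp
  have Mpos: "M > 0" using M_pos[OF p1 q1 cop] unfolding M_def .
  have conv: "\<And>n. (\<exists>i j. n = i*P + j*Q \<and> j \<le> i + 1) \<longleftrightarrow>
      (\<exists>i j. i \<ge> 0 \<and> j \<ge> 0 \<and> j \<le> i + 1 \<and> int n = i*p + j*q)"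
  proof
    fix n assume "\<exists>i j. n = i*P + j*Q \<and> j \<le> i + 1"
    then obtain i j where "n = i*P + j*Q" "j \<le> i + 1" by blast
    then show "\<exists>i j. i \<ge> 0 \<and> j \<ge> 0 \<and> j \<le> i + 1 \<and> int n = i*p + j*q"
      by (rule_tac x="int i" in exI, rule_tac x="int j" in exI) (simp add: p_def q_def)
  next
    fix n assume "\<exists>i j. i \<ge> 0 \<and> j \<ge> 0 \<and> j \<le> i + 1 \<and> int n = i*p + j*q"
    then obtain i j where ij: "i \<ge> 0" "j \<ge> 0" "j \<le> i + 1" "int n = i*p + j*q" by blast
    have "int n = int (nat i * P + nat j * Q)" using ij by (simp add: p_def q_def)
    then have "n = nat i * P + nat j * Q" by linarith
    moreover have "nat j \<le> nat i + 1" using ij by simp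
    ultimately show "\<exists>i j. n = i*P + j*Q \<and> j \<le> i + 1" by blast
  qed
  define C where "C = {1..} - S ` L"
  have sub: "C \<subseteq> {1..nat M}"
  proof
    fix n assume "n \<in> C"
    then have n1: "n \<ge> 1" and nS: "n \<notin> S ` L" unfolding C_def by auto
    have "int n \<le> M"
    proof (rule ccontr)
      assume "\<not> int n \<le> M"
      then have "int n > p*(p-3) + q*(p-1)" unfolding M_def by simp
      from rep_big[OF p1 q1 cop this] have "n \<in> S ` L" using img conv n1 by auto
      then show False using nS by simp
    qed
    then show "n \<in> {1..nat M}" using n1 by simp
  qed
  have MC: "nat M \<in> C"
  proof -
    have "nat M \<notin> S ` L"
    proof
      assume "nat M \<in> S ` L"
      then obtain i j where ij: "i \<ge> 0" "j \<ge> 0" "j \<le> i + 1" "int (nat M) = i*p + j*q"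
        using img conv by blast
      then have "p*(p-3) + q*(p-1) = i*p + j*q" using Mpos unfolding M_def by simp
      then show False using not_rep[OF p1 q1 cop ij(1-3)] by simp
    qed
    then show ?thesis unfolding C_def using Mpos by simp
  qed
  have fin: "finite C" using sub finite_subset by blast
  have mx: "Max C = nat M"
    by (rule Max_eqI[OF fin]) (use sub MC in auto)
  show ?thesis
    using fin MC mx Mpos unfolding C_def L_def M_def p_def q_def P_def Q_def by auto
qed

end
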